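(* Let $\mathrm{M}$ be a matroid on a finite set $E$, let $\mathcal{M}$ be a proper modular cut of its lattice of flats, and let $e\notin E$. If $F$ is a minimal element of $\mathcal{M}$, then $F\sqcup\{e\}$ is an irreducible flat of $\mathrm{M}\cup_{\mathcal{M}}e$.
   Context: Flats are ordered by inclusion, $\hat0$ is the smallest flat. Flats $F,G$ form a modular pair if $\operatorname{rk}(F\vee G)+\operatorname{rk}(F\wedge G)=\operatorname{rk}F+\operatorname{rk}G$. A modular cut is an upward-closed set $\mathcal{M}$ of flats such that $F\wedge G\in\mathcal{M}$ whenever $F,G\in\mathcal{M}$ form a modular pair; it is proper if $\hat0\notin\mathcal{M}$. The single-element extension $\mathrm{M}\cup_{\mathcal{M}}e$ is the matroid on $E\sqcup\{e\}$ with rank function $\operatorname{rk}(S)=\operatorname{rk}_{\mathrm{M}}(S)$ and $\operatorname{rk}(S\sqcup\{e\})=\operatorname{rk}_{\mathrm{M}}(S)$ if $\operatorname{cl}_{\mathrm{M}}(S)\in\mathcal{M}$ and $\operatorname{rk}_{\mathrm{M}}(S)+1$ otherwise ($S\subseteq E$). A flat $H$ is irreducible if the interval $[\hat0,H]$ of the lattice of flats admits only trivial decompositions as a product of intervals $[\hat0,H_1]\times\dots\times[\hat0,H_m]$ (equivalently $H$ is not the disjoint union of two nonempty flats whose ranks add up to $\operatorname{rk}H$). *)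

theory Defs
  imports Main
begin

definition matroid :: "'a set \<Rightarrow> ('a set \<Rightarrow> nat) \<Rightarrow> bool" where
  "matroid E rk \<longleftrightarrow> finite E
     \<and> (\<forall>S. S \<subseteq> E \<longrightarrow> rk S \<le> card S)
     \<and> (\<forall>S T. S \<subseteq> T \<and> T \<subseteq> E \<longrightarrow> rk S \<le> rk T)
     \<and> (\<forall>S T. S \<subseteq> E \<and> T \<subseteq> E \<longrightarrow> rk (S \<union> T) + rk (S \<inter> T) \<le> rk S + rk T)"

definition mcl :: "'a set \<Rightarrow> ('a set \<Rightarrow> nat) \<Rightarrow> 'a set \<Rightarrow> 'a set" where
  "mcl E rk S = {x \<in> E. rk (insert x S) = rk S}"

definition flat :: "'a set \<Rightarrow> ('a set \<Rightarrow> nat) \<Rightarrow> 'a set \<Rightarrow> bool" where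
  "flat E rk F \<longleftrightarrow> F \<subseteq> E \<and> (\<forall>x \<in> E - F. rk (insert x F) \<noteq> rk F)"

text \<open>Join of flats is the closure of the union, meet is the intersection; bottom flat is cl(empty).\<close>
definition modular_pair :: "'a set \<Rightarrow> ('a set \<Rightarrow> nat) \<Rightarrow> 'a set \<Rightarrow> 'a set \<Rightarrow> bool" where
  "modular_pair E rk F G \<longleftrightarrow>
     rk (mcl E rk (F \<union> G)) + rk (F \<inter> G) = rk F + rk G"

definition modular_cut :: "'a set \<Rightarrow> ('a set \<Rightarrow> nat) \<Rightarrow> 'a set set \<Rightarrow> bool" where
  "modular_cut E rk MC \<longleftrightarrow>
     (\<forall>F \<in> MC. flat E rk F)
     \<and> (\<forall>F G. F \<in> MC \<and> flat E rk G \<and> F \<subseteq> G \<longrightarrow> G \<in> MC)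
     \<and> (\<forall>F G. F \<in> MC \<and> G \<in> MC \<and> modular_pair E rk F G \<longrightarrow> F \<inter> G \<in> MC)"

definition proper_modular_cut :: "'a set \<Rightarrow> ('a set \<Rightarrow> nat) \<Rightarrow> 'a set set \<Rightarrow> bool" where
  "proper_modular_cut E rk MC \<longleftrightarrow> modular_cut E rk MC \<and> mcl E rk {} \<notin> MC"

text \<open>Rank function of the single-element extension M \<union>_MC e (on E \<union> {e}).\<close>
definition ext_rank :: "'a set \<Rightarrow> ('a set \<Rightarrow> nat) \<Rightarrow> 'a set set \<Rightarrow> 'a \<Rightarrow> 'a set \<Rightarrow> nat" where
  "ext_rank E rk MC e S =
     (if e \<in> S then (if mcl E rk (S - {e}) \<in> MC then rk (S - {e}) else rk (S - {e}) + 1)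
      else rk S)"

definition irreducible_flat :: "'a set \<Rightarrow> ('a set \<Rightarrow> nat) \<Rightarrow> 'a set \<Rightarrow> bool" where
  "irreducible_flat E rk H \<longleftrightarrow> flat E rk H \<and>
     \<not> (\<exists>H1 H2. flat E rk H1 \<and> flat E rk H2 \<and> H1 \<noteq> {} \<and> H2 \<noteq> {}
               \<and> H1 \<inter> H2 = {} \<and> H = H1 \<union> H2 \<and> rk H1 + rk H2 = rk H)"

end

theory Submission
  imports Defs
begin

lemma rk_empty: assumes "matroid E rk" shows "rk {} = 0"
  using assms unfolding matroid_def by (metis card.empty empty_subsetI le_zero_eq)

lemma rk_mono: assumes "matroid E rk" "S \<subseteq> T" "T \<subseteq> E" shows "rk S \<le> rk T"
  using assms unfolding matroid_def by blast

lemma rk_sub: assumes "matroid E rk" "S \<subseteq> E" "T \<subseteq> E"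
  shows "rk (S \<union> T) + rk (S \<inter> T) \<le> rk S + rk T"
  using assms unfolding matroid_def by blast

lemma mcl_flat: assumes "flat E rk F" shows "mcl E rk F = F"
  using assms unfolding flat_def mcl_def by (auto simp: insert_absorb)

lemma mcl_insert_eq:
  assumes m: "matroid E rk" and A: "A \<subseteq> E" and x: "x \<in> E" and eq: "rk (insert x A) = rk A"
  shows "mcl E rk (insert x A) = mcl E rk A"
proof (rule set_eqI, rule iffI)
  fix y assume "y \<in> mcl E rk (insert x A)"
  hence y: "y \<in> E" "rk (insert y (insert x A)) = rk A" using eq by (auto simp: mcl_def)
  have "rk (insert y A) \<le> rk (insert y (insert x A))" using rk_mono[OF m, of "insert y A" "insert y (insert x A)"] A x y by auto
  moreover have "rk A \<le> rk (insert y A)" using rk_mono[OF m, of A "insert y A"] A y by auto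
  ultimately show "y \<in> mcl E rk A" using y by (auto simp: mcl_def)
next
  fix y assume "y \<in> mcl E rk A"
  hence y: "y \<in> E" "rk (insert y A) = rk A" by (auto simp: mcl_def)
  have "rk (insert y A \<union> insert x A) + rk (insert y A \<inter> insert x A) \<le> rk (insert y A) + rk (insert x A)"
    using rk_sub[OF m, of "insert y A" "insert x A"] A x y by auto
  moreover have "rk A \<le> rk (insert y A \<inter> insert x A)" using rk_mono[OF m, of A "insert y A \<inter> insert x A"] A x y by auto
  moreover have "rk (insert y A \<union> insert x A) = rk (insert y (insert x A))" 
  proof -
    have "insert y A \<union> insert x A = insert y (insert x A)" by blast
    thus ?thesis by (rule arg_cong)
  qed
  moreover have "rk (insert x A) \<le> rk (insert y (insert x A))" using rk_mono[OF m, of "insert x A" "insert y (insert x A)"] A x y by auto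
  ultimately have "rk (insert y (insert x A)) = rk (insert x A)" using eq y by linarith
  thus "y \<in> mcl E rk (insert x A)" using y by (auto simp: mcl_def)
qed

lemma core:
  assumes m: "matroid E rk" and pm: "proper_modular_cut E rk MC" and eE: "e \<notin> E"
    and F: "F \<in> MC" and minF: "\<forall>G \<in> MC. G \<subseteq> F \<longrightarrow> G = F"
    and AB: "A \<inter> B = {}" "A \<union> B = F" "B \<noteq> {}"
    and fl: "flat (insert e E) (ext_rank E rk MC e) (insert e A)"
    and sum: "ext_rank E rk MC e (insert e A) + ext_rank E rk MC e B = ext_rank E rk MC e (insert e F)"
  shows False
proof -
  have mc: "modular_cut E rk MC" using pm by (simp add: proper_modular_cut_def)
  have flF: "flat E rk F" using mc F unfolding modular_cut_def by blast
  hence FE: "F \<subseteq> E" by (simp add: flat_def)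
  have AE: "A \<subseteq> E" "B \<subseteq> E" using AB FE by auto
  have eA: "e \<notin> A" "e \<notin> B" using AE eE by auto
  have r1: "ext_rank E rk MC e (insert e F) = rk F"
  proof -
    have "insert e F - {e} = F" using eE FE by blast
    thus ?thesis using mcl_flat[OF flF] F by (simp add: ext_rank_def)
  qed
  have r2: "ext_rank E rk MC e B = rk B" using eA by (simp add: ext_rank_def)
  have sub: "rk F \<le> rk A + rk B" using rk_sub[OF m AE] AB rk_empty[OF m] by simp
  have inA: "mcl E rk A \<in> MC"
  proof (rule ccontr)
    assume "mcl E rk A \<notin> MC"
    hence "ext_rank E rk MC e (insert e A) = rk A + 1" using eA by (simp add: ext_rank_def)
    thus False using sum r1 r2 sub by linarith
  qed
  have rA: "ext_rank E rk MC e (insert e A) = rk A" using inA eA by (simp add: ext_rank_def)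
  have flA: "flat E rk A"
    unfolding flat_def
  proof (intro conjI ballI)
    show "A \<subseteq> E" by (rule AE)
    fix x assume x: "x \<in> E - A"
    show "rk (insert x A) \<noteq> rk A"
    proof
      assume eq: "rk (insert x A) = rk A"
      have "mcl E rk (insert x A) = mcl E rk A" using mcl_insert_eq[OF m AE(1) _ eq] x by auto
      hence m1: "mcl E rk (insert x A) \<in> MC" using inA by simp
      have d: "insert x (insert e A) - {e} = insert x A" using x eE eA by blast
      have "ext_rank E rk MC e (insert x (insert e A)) = rk (insert x A)"
        unfolding ext_rank_def d using m1 by simp
      hence "ext_rank E rk MC e (insert x (insert e A)) = rk A" using eq by simp
      moreover have "x \<in> insert e E - insert e A" using x eE by auto
      moreover have "\<forall>y \<in> insert e E - insert e A. ext_rank E rk MC e (insert y (insert e A)) \<noteq> ext_rank E rk MC e (insert e A)"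
        using fl unfolding flat_def by (elim conjE)
      ultimately show False using rA by metis
    qed
  qed
  have "A \<in> MC" using inA mcl_flat[OF flA] by simp
  hence "A = F" using minF AB by auto
  thus False using AB by auto
qed

theorem lemma2p19:
  fixes E :: "'a set" and rk :: "'a set \<Rightarrow> nat" and MC :: "'a set set" and e :: 'a and F :: "'a set"
  assumes "matroid E rk"
    and "proper_modular_cut E rk MC"
    and "e \<notin> E"
    and "F \<in> MC"
    and "\<forall>G \<in> MC. G \<subseteq> F \<longrightarrow> G = F"
  shows "irreducible_flat (insert e E) (ext_rank E rk MC e) (insert e F)"
proof -
  note m = assms(1)
  have mc: "modular_cut E rk MC" using assms(2) by (simp add: proper_modular_cut_def)
  have flF: "flat E rk F" using mc assms(4) unfolding modular_cut_def by blast
  hence FE: "F \<subseteq> E" by (simp add: flat_def)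
  have r1: "ext_rank E rk MC e (insert e F) = rk F"
  proof -
    have "insert e F - {e} = F" using assms(3) FE by blast
    thus ?thesis using mcl_flat[OF flF] assms(4) by (simp add: ext_rank_def)
  qed
  have flat1: "flat (insert e E) (ext_rank E rk MC e) (insert e F)"
    unfolding flat_def
  proof (intro conjI ballI)
    show "insert e F \<subseteq> insert e E" using FE by auto
    fix x assume x: "x \<in> insert e E - insert e F"
    hence xE: "x \<in> E - F" by auto
    have "rk (insert x F) \<noteq> rk F" using flF xE by (auto simp: flat_def)
    moreover have "rk F \<le> rk (insert x F)" using rk_mono[OF m, of F "insert x F"] FE xE by auto
    ultimately have "rk F < rk (insert x F)" by simp
    moreover have "ext_rank E rk MC e (insert x (insert e F)) \<ge> rk (insert x F)"
    proof -
      have d: "insert x (insert e F) - {e} = insert x F" using xE assms(3) FE by blast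
      show ?thesis unfolding ext_rank_def d by simp
    qed
    ultimately show "ext_rank E rk MC e (insert x (insert e F)) \<noteq> ext_rank E rk MC e (insert e F)"
      using r1 by linarith
  qed
  show ?thesis unfolding irreducible_flat_def
  proof (intro conjI flat1 notI)
    assume "\<exists>H1 H2. flat (insert e E) (ext_rank E rk MC e) H1 \<and> flat (insert e E) (ext_rank E rk MC e) H2 \<and>
        H1 \<noteq> {} \<and> H2 \<noteq> {} \<and> H1 \<inter> H2 = {} \<and> insert e F = H1 \<union> H2 \<and>
        ext_rank E rk MC e H1 + ext_rank E rk MC e H2 = ext_rank E rk MC e (insert e F)"
    then obtain H1 H2 where h: "flat (insert e E) (ext_rank E rk MC e) H1" "flat (insert e E) (ext_rank E rk MC e) H2"
        "H1 \<noteq> {}" "H2 \<noteq> {}" "H1 \<inter> H2 = {}" "insert e F = H1 \<union> H2"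
        "ext_rank E rk MC e H1 + ext_rank E rk MC e H2 = ext_rank E rk MC e (insert e F)" by blast
    show False
    proof (cases "e \<in> H1")
      case True
      define A where "A = H1 - {e}"
      have H1: "H1 = insert e A" using True A_def by auto
      have "e \<notin> H2" using True h(5) by auto
      have eF: "e \<notin> F" using assms(3) FE by blast
      have "A \<inter> H2 = {}" using h(5) unfolding A_def by blast
      moreover have "A \<union> H2 = F" using h(6) eF \<open>e \<notin> H2\<close> unfolding A_def set_eq_iff by fastforce
      moreover have "flat (insert e E) (ext_rank E rk MC e) (insert e A)" using h(1) H1 by simp
      moreover have "ext_rank E rk MC e (insert e A) + ext_rank E rk MC e H2 = ext_rank E rk MC e (insert e F)"
        using h(7) H1 by simp
      ultimately show False using core[OF assms(1-5), of A H2] h(4) by blast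
    next
      case False
      hence True: "e \<in> H2" using h(6) by auto
      define A where "A = H2 - {e}"
      have H2: "H2 = insert e A" using True A_def by auto
      have eF: "e \<notin> F" using assms(3) FE by blast
      have "A \<inter> H1 = {}" using h(5) unfolding A_def by blast
      moreover have "A \<union> H1 = F" using h(6) eF False unfolding A_def set_eq_iff by fastforce
      moreover have "flat (insert e E) (ext_rank E rk MC e) (insert e A)" using h(2) H2 by simp
      moreover have "ext_rank E rk MC e (insert e A) + ext_rank E rk MC e H1 = ext_rank E rk MC e (insert e F)"
        using h(7) H2 by simp
      ultimately show False using core[OF assms(1-5), of A H1] h(3) by blast
    qed
  qed
qed

end
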